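(* Let $\mathcal{G}=(V,D,B)$ be a mixed graph, and let $C_1,\dots,C_l$ be the vertex sets of the connected components of its bidirected part $\mathcal{G}_\leftrightarrow=(V,\emptyset,B)$. Then $\tau(\mathcal{G})\le\max_{j=1,\dots,l}|\mathrm{Pa}(C_j)|$; that is, if $n\ge\max_j|\mathrm{Pa}(C_j)|$ then $\hat\ell(\mathcal{G}\mid S_{0,n})<\infty$ almost surely.
   Context: A mixed graph is a triple $\mathcal{G}=(V,D,B)$ with $V=\{1,\dots,p\}$, $D\subseteq V\times V$ directed edges $i\to j$ (no self-loops), and $B$ a set of 2-element subsets of $V$ (bidirected edges). $\mathrm{pa}(j)=\{k: k\to j\in D\}$ and $\mathrm{Pa}(A)=A\cup\bigcup_{i\in A}\mathrm{pa}(i)$. $\mathbb{R}^D_{\mathrm{reg}}$ is the set of real $p\times p$ matrices $\Lambda$ with $\lambda_{ij}=0$ whenever $i\to j\notin D$ and $I-\Lambda$ invertible; $PD(B)$ is the set of positive definite $\Omega$ with $\omega_{ij}=0$ for $i\neq j$, $\{i,j\}\notin B$; $PD(\mathcal{G})=\{(I-\Lambda)^{-T}\Omega(I-\Lambda)^{-1}:\Lambda\in\mathbb{R}^D_{\mathrm{reg}},\Omega\in PD(B)\}$. For an i.i.d. sample $X^{(1)},\dots,X^{(n)}$ from an absolutely continuous distribution on $\mathbb{R}^p$, $S_{0,n}=\frac1n\sum_s X^{(s)}(X^{(s)})^T$; $\ell(\Sigma\mid S)=-\log\det\Sigma-\mathrm{trace}(\Sigma^{-1}S)$; $\hat\ell(\mathcal{G}\mid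 S)=\sup_{\Sigma\in PD(\mathcal{G})}\ell(\Sigma\mid S)$; $\tau(\mathcal{G})=\min\{N\in\mathbb{N}:\hat\ell(\mathcal{G}\mid S_{0,n})<\infty\text{ a.s. for all }n\ge N\}$. *)

theory Defs
  imports "HOL-Analysis.Analysis" "HOL-Probability.Probability"
begin

text \<open>Vertices V = {1..p} are modelled by a finite type 'n (p = CARD('n)).
  Directed edges D :: ('n \<times> 'n) set, (i,j) \<in> D meaning i \<rightarrow> j;
  bidirected edges B :: 'n set set (2-element subsets).\<close>

definition pa :: "('n \<times> 'n) set \<Rightarrow> 'n \<Rightarrow> 'n set" where
  "pa D j = {k. (k, j) \<in> D}"

definition Pa :: "('n \<times> 'n) set \<Rightarrow> 'n set \<Rightarrow> 'n set" where
  "Pa D A = A \<union> (\<Union>i\<in>A. pa D i)"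

definition bidir_rel :: "'n set set \<Rightarrow> ('n \<times> 'n) set" where
  "bidir_rel B = {(i, j). {i, j} \<in> B}"

definition bidir_components :: "'n set set \<Rightarrow> 'n set set" where
  "bidir_components B = UNIV // ((bidir_rel B)\<^sup>*)"

definition pos_def :: "real^'n^'n \<Rightarrow> bool" where
  "pos_def S \<longleftrightarrow> transpose S = S \<and> (\<forall>x. x \<noteq> 0 \<longrightarrow> x \<bullet> (S *v x) > 0)"

definition Lambda_reg :: "('n::finite \<times> 'n) set \<Rightarrow> (real^'n^'n) set" where
  "Lambda_reg D = {L. (\<forall>i j. (i, j) \<notin> D \<longrightarrow> L $ i $ j = 0) \<and> invertible (mat 1 - L)}"

definition PD_B :: "'n::finite set set \<Rightarrow> (real^'n^'n) set" where
  "PD_B B = {W. pos_def W \<and> (\<forall>i j. i \<noteq> j \<and> {i, j} \<notin> B \<longrightarrow> W $ i $ j = 0)}"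

definition PD_G :: "('n::finite \<times> 'n) set \<Rightarrow> 'n set set \<Rightarrow> (real^'n^'n) set" where
  "PD_G D B = {transpose (matrix_inv (mat 1 - L)) ** W ** matrix_inv (mat 1 - L) | L W.
                 L \<in> Lambda_reg D \<and> W \<in> PD_B B}"

definition sample_cov :: "nat \<Rightarrow> (nat \<Rightarrow> real^'n) \<Rightarrow> real^'n^'n" where
  "sample_cov n X = (\<chi> i j. (1 / real n) * (\<Sum>s<n. X s $ i * X s $ j))"

definition loglik :: "real^'n^'n \<Rightarrow> real^'n^'n \<Rightarrow> real" where
  "loglik S Sig = - ln (det Sig) - trace (matrix_inv Sig ** S)"

definition max_loglik :: "('n::finite \<times> 'n) set \<Rightarrow> 'n set set \<Rightarrow> real^'n^'n \<Rightarrow> ereal" where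
  "max_loglik D B S = (SUP Sig\<in>PD_G D B. ereal (loglik S Sig))"

end

theory Submission
  imports Defs
begin


definition Rm :: "'n::finite set \<Rightarrow> ('n \<Rightarrow> nat) \<Rightarrow> (nat \<Rightarrow> real^'n) \<Rightarrow> real^'n^'n" where
  "Rm Q f x = (\<chi> j. if j \<in> Q then x (f j) else axis j 1)"

lemma det_row_linear_form:
  fixes G :: "real^'n::finite^'n"
  shows "det (\<chi> i. if i = k then y else G $ i) = (\<chi> l. det (\<chi> i. if i = k then axis l 1 else G $ i)) \<bullet> y"
proof -
  have y: "y = (\<Sum>l\<in>UNIV. (y $ l) *s axis l 1)"
    by (rule basis_expansion[symmetric])
  have "det (\<chi> i. if i = k then y else G $ i) = det (\<chi> i. if i = k then (\<Sum>l\<in>UNIV. (y $ l) *s axis l 1) else G $ i)"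
    by (simp only: basis_expansion)
  also have "\<dots> = (\<Sum>l\<in>UNIV. det (\<chi> i. if i = k then (y $ l) *s axis l 1 else G $ i))"
    by (rule det_linear_row_sum) simp
  also have "\<dots> = (\<Sum>l\<in>UNIV. y $ l * det (\<chi> i. if i = k then axis l 1 else G $ i))"
    by (simp add: det_row_mul)
  finally show ?thesis by (simp add: inner_vec_def mult.commute)
qed

lemma meas_Rm_det:
  assumes "sets M = sets borel" "finite I" "f ` Q \<subseteq> I"
  shows "(\<lambda>x. det (Rm Q f x)) \<in> borel_measurable (PiM I (\<lambda>_. M))"
proof -
  have c: "(\<lambda>x. x (f j) $ k) \<in> borel_measurable (PiM I (\<lambda>_. M))" if "j \<in> Q" for j k
  proof -
    have "(\<lambda>x. x (f j)) \<in> measurable (PiM I (\<lambda>_. M)) M"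
      using that assms by (intro measurable_component_singleton) auto
    then have h: "(\<lambda>x. x (f j)) \<in> borel_measurable (PiM I (\<lambda>_. M))"
      by (metis measurable_cong_sets[OF refl assms(1)])
    have "(\<lambda>x. x (f j) \<bullet> axis k 1) \<in> borel_measurable (PiM I (\<lambda>_. M))"
      by (intro borel_measurable_inner h borel_measurable_const)
    then show ?thesis by (simp add: inner_axis)
  qed
  show ?thesis
    unfolding det_def Rm_def
  proof (intro borel_measurable_sum borel_measurable_times borel_measurable_const borel_measurable_prod)
    fix p i
    show "(\<lambda>x. (\<chi> j. if j \<in> Q then x (f j) else axis j 1) $ i $ p i) \<in> borel_measurable (PiM I (\<lambda>_. M))"
      using c by (cases "i \<in> Q") simp_all
  qed
qed


lemma null_hyperplane:
  fixes c :: "real^'n::finite"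
  assumes "c \<noteq> 0" "sets M = sets borel" "absolutely_continuous lborel M"
  shows "{y. c \<bullet> y = 0} \<in> null_sets M"
proof -
  have "negligible {y. c \<bullet> y = 0}" using negligible_hyperplane[of c 0] assms by simp
  then have "{y. c \<bullet> y = 0} \<in> null_sets lebesgue" by (simp add: negligible_iff_null_sets)
  moreover have "{y. c \<bullet> y = 0} \<in> sets borel" by measurable
  ultimately have "{y. c \<bullet> y = 0} \<in> null_sets lborel"
    by (simp add: null_sets_completion_iff)
  then show ?thesis using assms(3) unfolding absolutely_continuous_def by auto
qed

lemma Rm_empty: "Rm {} f x = mat 1"
  by (simp add: Rm_def vec_eq_iff axis_def mat_def)

lemma ae_Rm:
  fixes M :: "(real^'n::finite) measure"
  assumes prob: "prob_space M" and sb: "sets M = sets borel" and ac: "absolutely_continuous lborel M"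
  shows "finite Q \<Longrightarrow> inj_on f Q \<Longrightarrow> finite I \<Longrightarrow> f ` Q \<subseteq> I \<Longrightarrow>
     AE x in PiM I (\<lambda>_. M). det (Rm Q f x) \<noteq> 0"
proof (induction Q arbitrary: I rule: finite_induct)
  case empty
  then show ?case by (simp add: Rm_empty)
next
  case (insert j0 Q)
  interpret product_sigma_finite "\<lambda>_. M"
    by (simp add: product_sigma_finite_def prob prob_space_imp_sigma_finite)
  define i where "i = f j0"
  define I' where "I' = I - {i}"
  have iI: "i \<in> I" using insert i_def by auto
  have II: "I = insert i I'" "i \<notin> I'" "finite I'" using iI insert by (auto simp: I'_def)
  have fQ: "f ` Q \<subseteq> I'" using insert by (auto simp: I'_def i_def inj_on_def)
  have IH: "AE x in PiM I' (\<lambda>_. M). det (Rm Q f x) \<noteq> 0"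
    using insert II fQ by (intro insert.IH) auto
  define B where "B = {x \<in> space (PiM I (\<lambda>_. M)). det (Rm (insert j0 Q) f x) = 0}"
  have Bm: "B \<in> sets (PiM I (\<lambda>_. M))"
    unfolding B_def using meas_Rm_det[OF sb, of I f "insert j0 Q"] insert by measurable
  have key: "(\<integral>\<^sup>+ y. indicator B (x(i := y)) \<partial>M) = 0"
    if x: "x \<in> space (PiM I' (\<lambda>_. M))" and d: "det (Rm Q f x) \<noteq> 0" for x
  proof -
    define G where "G = Rm Q f x"
    define c where "c = (\<chi> l. det (\<chi> k. if k = j0 then axis l 1 else G $ k))"
    have eq: "Rm (insert j0 Q) f (x(i := y)) = (\<chi> k. if k = j0 then y else G $ k)" for y
      using insert(1,2,4) unfolding G_def Rm_def i_def
      by (auto simp: vec_eq_iff inj_on_def)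
    have Gj0: "G $ j0 = axis j0 1" using insert(2) by (simp add: G_def Rm_def)
    have GG: "(\<chi> k. if k = j0 then axis j0 1 else G $ k) = G" using Gj0 by (auto simp: vec_eq_iff)
    have "c $ j0 = det G"
      unfolding c_def using GG by simp
    then have c0: "c \<noteq> 0" using d G_def by auto
    have "x(i := y) \<in> space (PiM I (\<lambda>_. M))" for y
      using x II sb by (auto simp: space_PiM PiE_def extensional_def Pi_def sets_eq_imp_space_eq)
    then have ind: "indicator B (x(i := y)) = (indicator {y. c \<bullet> y = 0} y :: ennreal)" for y
      unfolding B_def c_def by (simp add: eq det_row_linear_form[symmetric] indicator_def)
    have "(\<integral>\<^sup>+ y. indicator B (x(i := y)) \<partial>M) = (\<integral>\<^sup>+ y. indicator {y. c \<bullet> y = 0} y \<partial>M)"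
      by (simp add: ind)
    also have "\<dots> = emeasure M {y. c \<bullet> y = 0}"
      using null_hyperplane[OF c0 sb ac] by (intro nn_integral_indicator) auto
    also have "\<dots> = 0" using null_hyperplane[OF c0 sb ac] by auto
    finally show ?thesis .
  qed
  have "emeasure (PiM I (\<lambda>_. M)) B = (\<integral>\<^sup>+ x. indicator B x \<partial>PiM I (\<lambda>_. M))"
    using Bm by simp
  also have "\<dots> = (\<integral>\<^sup>+ x. (\<integral>\<^sup>+ y. indicator B (x(i := y)) \<partial>M) \<partial>PiM I' (\<lambda>_. M))"
    unfolding II(1) using II Bm by (intro product_nn_integral_insert) (auto simp: II(1)[symmetric])
  also have "\<dots> = (\<integral>\<^sup>+ x. 0 \<partial>PiM I' (\<lambda>_. M))"
    using IH by (intro nn_integral_cong_AE) (auto simp: key)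
  finally have "B \<in> null_sets (PiM I (\<lambda>_. M))" using Bm by auto
  then show ?case by (rule AE_I') (auto simp: B_def)
qed



lemma inv_props:
  fixes A :: "real^'n::finite^'n"
  assumes "invertible A"
  shows "A ** matrix_inv A = mat 1" "matrix_inv A ** A = mat 1"
  using someI_ex[OF assms[unfolded invertible_def]] unfolding matrix_inv_def by auto

lemma inv_unique:
  fixes A B :: "real^'n::finite^'n"
  assumes "A ** B = mat 1" "B ** A = mat 1"
  shows "matrix_inv A = B" "invertible A"
proof -
  show inv: "invertible A" using assms unfolding invertible_def by auto
  have "matrix_inv A = matrix_inv A ** (A ** B)" using assms by simp
  also have "\<dots> = (matrix_inv A ** A) ** B" by (simp add: matrix_mul_assoc)
  also have "\<dots> = B" using inv_props[OF inv] by simp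
  finally show "matrix_inv A = B" .
qed

lemma pos_def_invertible:
  fixes W :: "real^'n::finite^'n"
  assumes "pos_def W"
  shows "invertible W"
proof -
  have "inj ((*v) W)"
  proof (rule injI)
    fix x y assume "W *v x = W *v y"
    then have "W *v (x - y) = 0" by (simp add: matrix_vector_mult_diff_distrib)
    then show "x = y" using assms unfolding pos_def_def
      by (metis inner_zero_right less_irrefl right_minus_eq)
  qed
  then have "det (matrix ((*v) W)) \<noteq> 0"
    by (subst det_nz_iff_inj) (auto simp: matrix_vector_mul_linear)
  then show ?thesis by (simp add: invertible_det_nz matrix_of_matrix_vector_mul)
qed

lemma transpose_inv_sym:
  fixes W :: "real^'n::finite^'n"
  assumes "invertible W" "transpose W = W"
  shows "transpose (matrix_inv W) = matrix_inv W"
proof -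
  have "W ** transpose (matrix_inv W) = mat 1"
    using arg_cong[OF inv_props(2)[OF assms(1)], of transpose] assms(2)
    by (simp add: matrix_transpose_mul)
  moreover have "transpose (matrix_inv W) ** W = mat 1"
    using arg_cong[OF inv_props(1)[OF assms(1)], of transpose] assms(2)
    by (simp add: matrix_transpose_mul)
  ultimately show ?thesis using inv_unique by metis
qed

lemma dot_mv_transpose: "(x::real^'n::finite) \<bullet> (A *v y) = (transpose A *v x) \<bullet> y"
  by (simp add: dot_lmul_matrix)

lemma inv_psd:
  fixes W :: "real^'n::finite^'n"
  assumes "pos_def W"
  shows "u \<bullet> (matrix_inv W *v u) \<ge> 0"
proof -
  have inv: "invertible W" using pos_def_invertible[OF assms] .
  define z where "z = matrix_inv W *v u"
  have u: "u = W *v z" unfolding z_def using inv_props[OF inv]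
    by (simp add: matrix_vector_mul_assoc)
  have "u \<bullet> z = z \<bullet> (W *v z)" unfolding u by (rule inner_commute)
  also have "\<dots> \<ge> 0" using assms unfolding pos_def_def
    by (cases "z = 0") (auto intro: less_imp_le)
  finally show ?thesis by (simp add: z_def)
qed

definition qf :: "real^'n::finite^'n \<Rightarrow> real^'n \<Rightarrow> real" where
  "qf Q u = u \<bullet> (Q *v u)"

lemma qf_add_le:
  assumes "\<And>u. qf Q u \<ge> 0"
  shows "qf Q (x + y) \<le> 2 * qf Q x + 2 * qf Q y"
proof -
  have "qf Q (x + y) + qf Q (x - y) = 2 * qf Q x + 2 * qf Q y"
    unfolding qf_def
    by (simp add: matrix_vector_right_distrib matrix_vector_mult_diff_distrib inner_add_left
        inner_add_right inner_diff_left inner_diff_right)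
  then show ?thesis using assms[of "x - y"] by linarith
qed

lemma qf_scale: "qf Q (c *\<^sub>R x) = c^2 * qf Q x"
  unfolding qf_def by (simp add: power2_eq_square matrix_vector_mult_scaleR)

lemma qf_sum_le:
  assumes "\<And>u. qf Q u \<ge> 0" "finite F"
  shows "qf Q (\<Sum>j\<in>F. a j) \<le> 2 ^ card F * (\<Sum>j\<in>F. qf Q (a j))"
  using assms(2)
proof (induction F rule: finite_induct)
  case empty
  then show ?case by (simp add: qf_def)
next
  case (insert x F)
  have "qf Q (\<Sum>j\<in>insert x F. a j) = qf Q (a x + (\<Sum>j\<in>F. a j))" using insert by simp
  also have "\<dots> \<le> 2 * qf Q (a x) + 2 * qf Q (\<Sum>j\<in>F. a j)" by (rule qf_add_le[OF assms(1)])
  also have "\<dots> \<le> 2 * qf Q (a x) + 2 * (2 ^ card F * (\<Sum>j\<in>F. qf Q (a j)))" using insert by simp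
  also have "\<dots> \<le> 2 ^ card (insert x F) * (\<Sum>j\<in>insert x F. qf Q (a j))"
  proof -
    have "(1::real) \<le> 2 ^ card F" by simp
    moreover have "qf Q (a x) \<ge> 0" by (rule assms(1))
    ultimately have "2 * qf Q (a x) \<le> 2 * 2 ^ card F * qf Q (a x)" by (simp add: mult_right_mono)
    then show ?thesis using insert by (simp add: algebra_simps)
  qed
  finally show ?case .
qed

lemma axis_entry: "axis i 1 \<bullet> ((K::real^'n::finite^'n) *v axis j 1) = K $ i $ j"
proof -
  have "axis i 1 \<bullet> v = v $ i" for v :: "real^'n" by (simp add: inner_axis')
  then show ?thesis by (simp add: matrix_vector_mult_basis column_def)
qed

lemma qf_bilin:
  "qf K (x + y) = qf K x + x \<bullet> (K *v y) + y \<bullet> (K *v x) + qf K y"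
  "qf K (x - y) = qf K x - x \<bullet> (K *v y) - y \<bullet> (K *v x) + qf K y"
  unfolding qf_def
  by (simp_all add: matrix_vector_right_distrib matrix_vector_mult_diff_distrib inner_add_left
        inner_add_right inner_diff_left inner_diff_right)

lemma entry_bound:
  fixes K :: "real^'n::finite^'n"
  assumes sym: "transpose K = K" and psd: "\<And>u. qf K u \<ge> 0"
  shows "\<bar>K $ i $ j\<bar> \<le> trace K"
proof -
  have diag: "K $ k $ k \<ge> 0" for k
    using psd[of "axis k 1"] by (simp add: qf_def axis_entry)
  have tr: "trace K = (\<Sum>k\<in>UNIV. K $ k $ k)" by (simp add: trace_def)
  show ?thesis
  proof (cases "i = j")
    case True
    have "K $ i $ i \<le> (\<Sum>k\<in>UNIV. K $ k $ k)"
      using diag by (intro member_le_sum) auto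
    then show ?thesis using True diag[of i] tr by simp
  next
    case False
    have s: "K $ j $ i = K $ i $ j" using sym by (metis transpose_def vec_lambda_beta)
    have "(\<Sum>k\<in>{i,j}. K $ k $ k) \<le> (\<Sum>k\<in>UNIV. K $ k $ k)"
      using diag by (intro sum_mono2) auto
    then have t: "K $ i $ i + K $ j $ j \<le> trace K" using False tr by simp
    have p: "0 \<le> K $ i $ i + 2 * K $ i $ j + K $ j $ j"
      using psd[of "axis i 1 + axis j 1"] s unfolding qf_bilin by (simp add: qf_def axis_entry)
    have m: "0 \<le> K $ i $ i - 2 * K $ i $ j + K $ j $ j"
      using psd[of "axis i 1 - axis j 1"] s unfolding qf_bilin by (simp add: qf_def axis_entry)
    show ?thesis using p m t diag[of i] diag[of j] by linarith
  qed
qed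

lemma det_bound:
  fixes K :: "real^'n::finite^'n"
  assumes sym: "transpose K = K" and psd: "\<And>u. qf K u \<ge> 0"
  shows "\<bar>det K\<bar> \<le> real (card {p. p permutes (UNIV::'n set)}) * trace K ^ CARD('n)"
proof -
  let ?P = "{p. p permutes (UNIV::'n set)}"
  have "\<bar>det K\<bar> \<le> (\<Sum>p\<in>?P. \<bar>of_int (sign p) * (\<Prod>i\<in>UNIV. K $ i $ p i)\<bar>)"
    unfolding det_def by (rule sum_abs)
  also have "\<dots> \<le> (\<Sum>p\<in>?P. trace K ^ CARD('n))"
  proof (rule sum_mono)
    fix p
    have "\<bar>of_int (sign p) * (\<Prod>i\<in>UNIV. K $ i $ p i)\<bar> = (\<Prod>i\<in>UNIV. \<bar>K $ i $ p i\<bar>)"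
    proof -
      have "\<bar>of_int (sign p) :: real\<bar> = 1" by (simp add: sign_def)
      then show ?thesis by (simp only: abs_mult abs_prod)
    qed
    also have "\<dots> \<le> (\<Prod>i\<in>(UNIV::'n set). trace K)"
      using entry_bound[OF sym psd] by (intro prod_mono) simp
    finally show "\<bar>of_int (sign p) * (\<Prod>i\<in>UNIV. K $ i $ p i)\<bar> \<le> trace K ^ CARD('n)" by simp
  qed
  also have "\<dots> = real (card ?P) * trace K ^ CARD('n)" by simp
  finally show ?thesis .
qed

lemma trace_nonneg:
  fixes K :: "real^'n::finite^'n"
  assumes psd: "\<And>u. qf K u \<ge> 0"
  shows "trace K \<ge> 0"
proof -
  have "K $ k $ k \<ge> 0" for k using psd[of "axis k 1"] by (simp add: qf_def axis_entry)
  then show ?thesis by (simp add: trace_def sum_nonneg)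
qed

lemma ln_abs_real: "ln \<bar>x::real\<bar> = ln x"
  by (cases "x \<ge> 0") (auto simp: ln_minus)

lemma loglik_bound:
  fixes K Sig S :: "real^'n::finite^'n"
  assumes inv1: "Sig ** K = mat 1" and inv2: "K ** Sig = mat 1"
    and sym: "transpose K = K" and psd: "\<And>u. qf K u \<ge> 0" and c: "c > 0"
    and tr: "trace K \<le> c * trace (K ** S)"
  shows "loglik S Sig \<le> ln (real (card {p. p permutes (UNIV::'n set)})) + real CARD('n) * ln (real CARD('n) * c) - real CARD('n)"
proof -
  let ?N = "real (card {p. p permutes (UNIV::'n set)})"
  let ?p = "real CARD('n)"
  define t where "t = trace K"
  have mi: "matrix_inv Sig = K" using inv_unique[OF inv1 inv2] by simp
  have dd: "det Sig * det K = 1" using arg_cong[OF inv1, of det] by (simp add: det_mul)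
  then have dK: "det K \<noteq> 0" "det Sig \<noteq> 0" by auto
  have l: "- ln (det Sig) = ln \<bar>det K\<bar>"
  proof -
    have "ln (det Sig * det K) = ln (det Sig) + ln (det K)" using ln_mult[of "det Sig" "det K"] dK by argo
    then have "ln (det Sig) + ln (det K) = 0" using dd by simp
    then show ?thesis using ln_abs_real[of "det K"] by linarith
  qed
  have db: "\<bar>det K\<bar> \<le> ?N * t ^ CARD('n)" unfolding t_def by (rule det_bound[OF sym psd])
  have t0: "t \<ge> 0" unfolding t_def by (rule trace_nonneg[OF psd])
  have pos: "0 < ?N * t ^ CARD('n)" using db dK by linarith
  have "?N \<noteq> 0" using pos by (metis less_irrefl mult_zero_left)
  then have Npos: "?N > 0" by linarith
  have "t \<noteq> 0" using pos by (metis less_irrefl mult_zero_right zero_less_card_finite zero_power)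
  then have tpos: "t > 0" using t0 by linarith
  have "ln \<bar>det K\<bar> \<le> ln (?N * t ^ CARD('n))"
  proof -
    have a: "0 < \<bar>det K\<bar>" using dK by simp
    show ?thesis by (rule iffD2[OF ln_le_cancel_iff[OF a pos] db])
  qed
  also have "\<dots> = ln ?N + ln (t ^ CARD('n))"
    by (rule ln_mult_pos[OF Npos]) (rule zero_less_power[OF tpos])
  also have "\<dots> = ln ?N + ?p * ln t" using tpos by (simp add: ln_realpow)
  finally have A: "ln \<bar>det K\<bar> \<le> ln ?N + ?p * ln t" .
  have B: "trace (K ** S) \<ge> t / c" using tr c unfolding t_def by (simp add: divide_le_eq mult.commute)
  have ppos: "?p > 0" by simp
  have "ln (t / (?p * c)) \<le> t / (?p * c) - 1" using tpos ppos c by (intro ln_le_minus_one) auto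
  then have "ln t - ln (?p * c) \<le> t / (?p * c) - 1" using tpos ppos c by (simp add: ln_div)
  then have "?p * (ln t - ln (?p * c)) \<le> ?p * (t / (?p * c) - 1)" using ppos by (intro mult_left_mono) auto
  then have C: "?p * ln t \<le> ?p * ln (?p * c) + t / c - ?p" using ppos c by (simp add: algebra_simps)
  have "loglik S Sig = ln \<bar>det K\<bar> - trace (K ** S)" unfolding loglik_def mi using l by simp
  also have "\<dots> \<le> ln ?N + ?p * ln t - t / c" using A B by linarith
  also have "\<dots> \<le> ln ?N + ?p * ln (?p * c) - ?p" using C by linarith
  finally show ?thesis .
qed



lemma equiv_E: "equiv UNIV ((bidir_rel B)\<^sup>*)"
proof -
  have "sym (bidir_rel B)" unfolding bidir_rel_def sym_def by (auto simp: insert_commute)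
  then have "sym ((bidir_rel B)\<^sup>*)" by (rule sym_rtrancl)
  then show ?thesis unfolding equiv_def refl_on_def by (auto intro: trans_rtrancl)
qed

definition diagm :: "'n::finite set \<Rightarrow> real^'n^'n" where
  "diagm C = (\<chi> a b. if a = b \<and> a \<in> C then 1 else 0)"

lemma sum_single: "(\<Sum>k\<in>(UNIV::'n::finite set). if k = b \<and> P k then f k else (0::real)) = (if P b then f b else 0)"
proof -
  have *: "(\<lambda>k. if k = b \<and> P k then f k else 0) = (\<lambda>k. if k = b then (if P b then f b else 0) else 0)"
    by (auto simp: fun_eq_iff)
  show ?thesis unfolding * by simp
qed

lemma sum_single': "(\<Sum>k\<in>(UNIV::'n::finite set). if b = k \<and> P k then f k else (0::real)) = (if P b then f b else 0)"
proof -
  have *: "(\<lambda>k. if b = k \<and> P k then f k else 0) = (\<lambda>k. if k = b then (if P b then f b else 0) else 0)"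
    by (auto simp: fun_eq_iff)
  show ?thesis unfolding * by simp
qed

lemma mult_diagm_right: "(A ** diagm C) $ a $ b = A $ a $ b * (if b \<in> C then 1 else 0)"
  by (simp add: matrix_matrix_mult_def diagm_def if_distrib[of "\<lambda>x. _ * x"] sum_single sum_single' cong: if_cong)

lemma mult_diagm_left: "(diagm C ** A) $ a $ b = (if a \<in> C then 1 else 0) * A $ a $ b"
  by (simp add: matrix_matrix_mult_def diagm_def if_distrib[of "\<lambda>x. x * _"] sum_single sum_single' cong: if_cong)

lemma W_offdiag:
  assumes "W \<in> PD_B B" "(a, b) \<notin> (bidir_rel B)\<^sup>*"
  shows "W $ a $ b = 0"
proof -
  have "a \<noteq> b" using assms(2) by auto
  moreover have "{a, b} \<notin> B" using assms(2) by (auto simp: bidir_rel_def)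
  ultimately show ?thesis using assms(1) by (auto simp: PD_B_def)
qed

lemma Winv_blockdiag:
  assumes W: "W \<in> PD_B B" and ij: "(i, j) \<notin> (bidir_rel B)\<^sup>*"
  shows "matrix_inv W $ i $ j = 0"
proof -
  let ?E = "(bidir_rel B)\<^sup>*"
  have eq: "equiv UNIV ?E" by (rule equiv_E)
  define C where "C = ?E `` {j}"
  have comm: "W ** diagm C = diagm C ** W"
  proof -
    have "W $ a $ b * (if b \<in> C then 1 else 0) = (if a \<in> C then 1 else 0) * W $ a $ b" for a b
    proof (cases "a \<in> C \<longleftrightarrow> b \<in> C")
      case True then show ?thesis by simp
    next
      case False
      have "(a, b) \<notin> ?E"
      proof
        assume ab: "(a, b) \<in> ?E"
        then have "(b, a) \<in> ?E" using eq by (meson equivE symD)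
        then show False using False ab eq unfolding C_def
          by (meson Image_singleton_iff equivE transD)
      qed
      then show ?thesis using W_offdiag[OF W] by simp
    qed
    then show ?thesis by (simp add: vec_eq_iff mult_diagm_right mult_diagm_left)
  qed
  have inv: "invertible W" using W pos_def_invertible by (auto simp: PD_B_def)
  note I = inv_props[OF inv]
  have "matrix_inv W ** diagm C = matrix_inv W ** diagm C ** (W ** matrix_inv W)"
    using I by simp
  also have "\<dots> = matrix_inv W ** (diagm C ** W) ** matrix_inv W"
    by (simp add: matrix_mul_assoc)
  also have "\<dots> = matrix_inv W ** (W ** diagm C) ** matrix_inv W"
    by (simp add: comm)
  also have "\<dots> = (matrix_inv W ** W) ** diagm C ** matrix_inv W"
    by (simp add: matrix_mul_assoc)
  also have "\<dots> = diagm C ** matrix_inv W"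
    using I by simp
  finally have "(matrix_inv W ** diagm C) $ i $ j = (diagm C ** matrix_inv W) $ i $ j" by simp
  moreover have "j \<in> C" unfolding C_def by simp
  moreover have "i \<notin> C" using ij eq unfolding C_def by (meson Image_singleton_iff equivE symD)
  ultimately show ?thesis by (simp add: mult_diagm_right mult_diagm_left)
qed



lemma qf_expand: "qf Q u = (\<Sum>i\<in>UNIV. \<Sum>j\<in>UNIV. u $ i * (Q $ i $ j * u $ j))"
  by (simp add: qf_def inner_vec_def matrix_vector_mult_def sum_distrib_left)

lemma diagm_mv: "(diagm C *v u) $ i = (if i \<in> C then u $ i else 0)"
  by (simp add: matrix_vector_mult_def diagm_def if_distrib[of "\<lambda>x. x * _"] sum_single' cong: if_cong)

lemma trace_axis: "trace (M::real^'n::finite^'n) = (\<Sum>k\<in>UNIV. axis k 1 \<bullet> (M *v axis k 1))"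
  by (simp add: trace_def axis_entry)

lemma trace_sample: "real n * trace ((M::real^'n::finite^'n) ** sample_cov n X) = (\<Sum>s<n. X s \<bullet> (M *v X s))"
proof (cases "n = 0")
  case True then show ?thesis by simp
next
  case False
  have "trace (M ** sample_cov n X) = (\<Sum>i\<in>UNIV. \<Sum>j\<in>UNIV. M $ i $ j * ((1 / real n) * (\<Sum>s<n. X s $ j * X s $ i)))"
    by (simp add: trace_def matrix_matrix_mult_def sample_cov_def)
  also have "\<dots> = (1 / real n) * (\<Sum>i\<in>UNIV. \<Sum>j\<in>UNIV. \<Sum>s<n. X s $ i * (M $ i $ j * X s $ j))"
    by (simp add: sum_distrib_left algebra_simps)
  also have "\<dots> = (1 / real n) * (\<Sum>i\<in>UNIV. \<Sum>s<n. \<Sum>j\<in>UNIV. X s $ i * (M $ i $ j * X s $ j))"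
    by (simp add: sum.swap[of _ UNIV "{..<n}"])
  also have "\<dots> = (1 / real n) * (\<Sum>s<n. \<Sum>i\<in>UNIV. \<Sum>j\<in>UNIV. X s $ i * (M $ i $ j * X s $ j))"
    by (subst sum.swap) simp
  also have "\<dots> = (1 / real n) * (\<Sum>s<n. X s \<bullet> (M *v X s))"
    by (simp add: inner_vec_def matrix_vector_mult_def sum_distrib_left)
  finally show ?thesis using False by simp
qed

lemma class_count:
  fixes B :: "'n::finite set set"
  assumes "(i, j) \<in> (bidir_rel B)\<^sup>*"
  shows "(\<Sum>C\<in>bidir_components B. (if i \<in> C then 1 else 0) * (if j \<in> C then 1 else (0::real))) = 1"
proof -
  let ?E = "(bidir_rel B)\<^sup>*"
  have eq: "equiv UNIV ?E" by (rule equiv_E)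
  have "(if i \<in> C then 1 else 0) * (if j \<in> C then 1 else (0::real)) = (if C = ?E``{i} then 1 else 0)"
    if C: "C \<in> bidir_components B" for C
  proof -
    obtain x where x: "C = ?E``{x}" using C unfolding bidir_components_def by (auto elim: quotientE)
    have "i \<in> C \<and> j \<in> C \<longleftrightarrow> C = ?E``{i}"
    proof
      assume "i \<in> C \<and> j \<in> C"
      then have "(x, i) \<in> ?E" using x by auto
      then show "C = ?E``{i}" using x eq by (simp add: equiv_class_eq_iff)
    next
      assume "C = ?E``{i}"
      then show "i \<in> C \<and> j \<in> C" using assms by auto
    qed
    then show ?thesis by auto
  qed
  then have "(\<Sum>C\<in>bidir_components B. (if i \<in> C then 1 else 0) * (if j \<in> C then 1 else (0::real)))
      = (\<Sum>C\<in>bidir_components B. if C = ?E``{i} then 1 else 0)"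
    by (intro sum.cong) auto
  also have "\<dots> = 1"
  proof -
    have "?E``{i} \<in> bidir_components B" unfolding bidir_components_def by (auto intro: quotientI)
    moreover have "finite (bidir_components B)"
      unfolding bidir_components_def by (rule finite_quotient) (simp_all add: equiv_E)
    ultimately show ?thesis by (simp add: sum.delta')
  qed
  finally show ?thesis .
qed

lemma qf_decomp:
  assumes W: "W \<in> PD_B B"
  shows "qf (matrix_inv W) u = (\<Sum>C\<in>bidir_components B. qf (matrix_inv W) (diagm C *v u))"
proof -
  let ?Q = "matrix_inv W"
  let ?g = "\<lambda>C i j. (diagm C *v u) $ i * (?Q $ i $ j * (diagm C *v u) $ j)"
  have pt: "(\<Sum>C\<in>bidir_components B. ?g C i j) = u $ i * (?Q $ i $ j * u $ j)" for i j
  proof (cases "(i, j) \<in> (bidir_rel B)\<^sup>*")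
    case True
    have "(\<Sum>C\<in>bidir_components B. ?g C i j)
        = (\<Sum>C\<in>bidir_components B. (if i \<in> C then 1 else 0) * (if j \<in> C then 1 else (0::real))) * (u $ i * (?Q $ i $ j * u $ j))"
      by (simp add: sum_distrib_right diagm_mv) (intro sum.cong refl, simp)
    then show ?thesis using class_count[OF True] by simp
  next
    case False
    then show ?thesis using Winv_blockdiag[OF W False] by simp
  qed
  have "(\<Sum>C\<in>bidir_components B. qf ?Q (diagm C *v u)) = (\<Sum>C\<in>bidir_components B. \<Sum>i\<in>UNIV. \<Sum>j\<in>UNIV. ?g C i j)"
    by (simp add: qf_expand)
  also have "\<dots> = (\<Sum>i\<in>UNIV. \<Sum>C\<in>bidir_components B. \<Sum>j\<in>UNIV. ?g C i j)"
    by (rule sum.swap)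
  also have "\<dots> = (\<Sum>i\<in>UNIV. \<Sum>j\<in>UNIV. \<Sum>C\<in>bidir_components B. ?g C i j)"
    by (intro sum.cong refl sum.swap)
  also have "\<dots> = qf ?Q u" by (simp add: pt qf_expand)
  finally show ?thesis by simp
qed

lemma support:
  assumes L: "L \<in> Lambda_reg D"
  shows "diagm C ** transpose (mat 1 - L) ** diagm (Pa D C) = diagm C ** transpose (mat 1 - L)"
proof -
  have "(if i \<in> C then 1 else 0) * (mat 1 - L) $ m $ i * (if m \<in> Pa D C then 1 else 0)
      = (if i \<in> C then 1 else 0) * (mat 1 - L) $ m $ i" for i m
  proof (cases "i \<in> C \<and> m \<notin> Pa D C")
    case True
    then have "m \<noteq> i" by (auto simp: Pa_def)
    moreover have "(m, i) \<notin> D" using True by (auto simp: Pa_def pa_def)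
    ultimately have "(mat 1 - L) $ m $ i = 0" using L by (simp add: Lambda_reg_def mat_def)
    then show ?thesis by simp
  next
    case False then show ?thesis by auto
  qed
  then show ?thesis by (simp add: vec_eq_iff mult_diagm_right mult_diagm_left transpose_def)
qed

lemma mv_sum: "(A::real^'n::finite^'m::finite) *v (\<Sum>j\<in>S. g j) = (\<Sum>j\<in>S. A *v g j)"
proof (induction S rule: infinite_finite_induct)
  case (infinite S) then show ?case by simp
next
  case empty then show ?case by simp
next
  case (insert x F) then show ?case by (simp add: matrix_vector_right_distrib)
qed

lemma represent:
  assumes d: "det (Rm P f X) \<noteq> 0"
  shows "diagm P *v axis k 1 = (\<Sum>j\<in>P. (matrix_inv (transpose (Rm P f X)) *v axis k 1) $ j *\<^sub>R (diagm P *v X (f j)))"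
proof -
  define R where "R = Rm P f X"
  define c where "c = matrix_inv (transpose R) *v axis k 1"
  have "invertible (transpose R)" using d unfolding R_def by (simp add: invertible_det_nz)
  then have tR: "transpose R *v c = axis k 1"
    unfolding c_def using inv_props(1)[of "transpose R"] by (simp add: matrix_vector_mul_assoc)
  have exp: "transpose R *v c = (\<Sum>j\<in>UNIV. c $ j *\<^sub>R R $ j)"
    by (simp add: vec_eq_iff matrix_vector_mult_def transpose_def sum_component mult.commute)
  have z: "diagm P *v (c $ j *\<^sub>R R $ j) = 0" if "j \<notin> P" for j
    using that by (simp add: vec_eq_iff diagm_mv R_def Rm_def axis_def matrix_vector_mult_scaleR)
  have "diagm P *v axis k 1 = (\<Sum>j\<in>UNIV. diagm P *v (c $ j *\<^sub>R R $ j))"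
    using tR exp by (simp add: mv_sum)
  also have "\<dots> = (\<Sum>j\<in>P. diagm P *v (c $ j *\<^sub>R R $ j))"
    using z by (intro sum.mono_neutral_right) auto
  also have "\<dots> = (\<Sum>j\<in>P. c $ j *\<^sub>R (diagm P *v X (f j)))"
    by (intro sum.cong refl) (simp add: R_def Rm_def matrix_vector_mult_scaleR)
  finally show ?thesis unfolding c_def R_def .
qed



declare transpose_matrix_vector[simp del]

lemma qK: "x \<bullet> ((A ** Q ** transpose A) *v x) = qf Q (transpose A *v (x::real^'n::finite))"
proof -
  have "(A ** Q ** transpose A) *v x = A *v (Q *v (transpose A *v x))"
    by (simp add: matrix_vector_mul_assoc matrix_mul_assoc)
  then show ?thesis by (simp add: dot_mv_transpose qf_def)
qed

lemma comp_bound: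
  fixes W :: "real^'n::finite^'n"
  assumes L: "L \<in> Lambda_reg D" and W: "W \<in> PD_B B"
    and inj: "inj_on f (Pa D C)" and fP: "f ` Pa D C \<subseteq> {..<n}" and d: "det (Rm (Pa D C) f X) \<noteq> 0"
    and G: "\<And>j. ((matrix_inv (transpose (Rm (Pa D C) f X)) *v axis k 1) $ j)^2 \<le> G"
  shows "qf (matrix_inv W) (diagm C *v (transpose (mat 1 - L) *v axis k 1))
     \<le> 2 ^ CARD('n) * G * (\<Sum>s<n. qf (matrix_inv W) (diagm C *v (transpose (mat 1 - L) *v X s)))"
proof -
  let ?P = "Pa D C"
  let ?Q = "matrix_inv W"
  let ?c = "matrix_inv (transpose (Rm ?P f X)) *v axis k 1"
  define T where "T = diagm C ** transpose (mat 1 - L)"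
  have psd: "qf ?Q u \<ge> 0" for u using W inv_psd by (auto simp: PD_B_def qf_def)
  have G0: "G \<ge> 0" using G[of k] by (meson order_trans zero_le_power2)
  have TP: "T ** diagm ?P = T" unfolding T_def by (rule support[OF L])
  have Tv: "diagm C *v (transpose (mat 1 - L) *v v) = T *v v" for v
    unfolding T_def by (simp add: matrix_vector_mul_assoc)
  have "T *v axis k 1 = T *v (diagm ?P *v axis k 1)"
    using TP by (simp add: matrix_vector_mul_assoc)
  also have "\<dots> = (\<Sum>j\<in>?P. ?c $ j *\<^sub>R (T *v (diagm ?P *v X (f j))))"
    by (simp add: represent[OF d] mv_sum matrix_vector_mult_scaleR)
  also have "\<dots> = (\<Sum>j\<in>?P. ?c $ j *\<^sub>R (T *v X (f j)))"
    using TP by (simp add: matrix_vector_mul_assoc)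
  finally have rep: "T *v axis k 1 = (\<Sum>j\<in>?P. ?c $ j *\<^sub>R (T *v X (f j)))" .
  have finP: "finite ?P" by simp
  have "qf ?Q (T *v axis k 1) \<le> 2 ^ card ?P * (\<Sum>j\<in>?P. qf ?Q (?c $ j *\<^sub>R (T *v X (f j))))"
    unfolding rep by (rule qf_sum_le[OF psd finP])
  also have "\<dots> = 2 ^ card ?P * (\<Sum>j\<in>?P. (?c $ j)^2 * qf ?Q (T *v X (f j)))"
    by (simp add: qf_scale)
  also have "\<dots> \<le> 2 ^ card ?P * (\<Sum>j\<in>?P. G * qf ?Q (T *v X (f j)))"
    by (intro mult_left_mono sum_mono mult_right_mono G psd) auto
  also have "\<dots> = 2 ^ card ?P * G * (\<Sum>s\<in>f ` ?P. qf ?Q (T *v X s))"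
    by (simp add: sum.reindex[OF inj] sum_distrib_left mult.assoc)
  also have "\<dots> \<le> 2 ^ card ?P * G * (\<Sum>s<n. qf ?Q (T *v X s))"
    using fP psd G0 by (intro mult_left_mono sum_mono2) auto
  also have "\<dots> \<le> 2 ^ CARD('n) * G * (\<Sum>s<n. qf ?Q (T *v X s))"
  proof -
    have "card ?P \<le> CARD('n)" by (rule card_mono) auto
    then have "(2::real) ^ card ?P \<le> 2 ^ CARD('n)" by (intro power_increasing) auto
    moreover have "0 \<le> G * (\<Sum>s<n. qf ?Q (T *v X s))" using G0 psd by (intro mult_nonneg_nonneg sum_nonneg) auto
    ultimately show ?thesis by (metis mult.assoc mult_right_mono)
  qed
  finally show ?thesis by (simp add: Tv)
qed

lemma trace_ineq:
  fixes W :: "real^'n::finite^'n"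
  assumes L: "L \<in> Lambda_reg D" and W: "W \<in> PD_B B"
    and good: "\<forall>C\<in>bidir_components B. inj_on (F C) (Pa D C) \<and> F C ` Pa D C \<subseteq> {..<n} \<and> det (Rm (Pa D C) (F C) X) \<noteq> 0"
  defines "G \<equiv> (\<Sum>C\<in>bidir_components B. \<Sum>k\<in>UNIV. \<Sum>j\<in>UNIV. ((matrix_inv (transpose (Rm (Pa D C) (F C) X)) *v axis k 1) $ j)^2)"
  shows "trace ((mat 1 - L) ** matrix_inv W ** transpose (mat 1 - L))
     \<le> (real CARD('n) * 2 ^ CARD('n) * G) * (real n * trace (((mat 1 - L) ** matrix_inv W ** transpose (mat 1 - L)) ** sample_cov n X))"
proof -
  let ?A = "mat 1 - L"
  let ?Q = "matrix_inv W"
  let ?K = "?A ** ?Q ** transpose ?A"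
  let ?cs = "bidir_components B"
  have fin: "finite ?cs" unfolding bidir_components_def by (rule finite_quotient) (simp_all add: equiv_E)
  have psd: "qf ?Q u \<ge> 0" for u using W inv_psd by (auto simp: PD_B_def qf_def)
  have Gb: "((matrix_inv (transpose (Rm (Pa D C) (F C) X)) *v axis k 1) $ j)^2 \<le> G" if C: "C \<in> ?cs" for C k j
  proof -
    let ?h = "\<lambda>C k j. ((matrix_inv (transpose (Rm (Pa D C) (F C) X)) *v axis k 1) $ j)^2"
    have "?h C k j \<le> (\<Sum>j\<in>UNIV. ?h C k j)" by (intro member_le_sum) auto
    also have "\<dots> \<le> (\<Sum>k\<in>UNIV. \<Sum>j\<in>UNIV. ?h C k j)" by (intro member_le_sum sum_nonneg) auto
    also have "\<dots> \<le> G" unfolding G_def using C fin by (intro member_le_sum sum_nonneg) auto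
    finally show ?thesis .
  qed
  have "trace ?K = (\<Sum>k\<in>UNIV. qf ?Q (transpose ?A *v axis k 1))"
    by (simp add: trace_axis qK)
  also have "\<dots> = (\<Sum>k\<in>UNIV. \<Sum>C\<in>?cs. qf ?Q (diagm C *v (transpose ?A *v axis k 1)))"
    by (rule sum.cong[OF refl], rule qf_decomp[OF W])
  also have "\<dots> \<le> (\<Sum>k\<in>(UNIV::'n set). \<Sum>C\<in>?cs. 2 ^ CARD('n) * G * (\<Sum>s<n. qf ?Q (diagm C *v (transpose ?A *v X s))))"
  proof (intro sum_mono)
    fix k C assume C: "C \<in> ?cs"
    show "qf ?Q (diagm C *v (transpose ?A *v axis k 1)) \<le> 2 ^ CARD('n) * G * (\<Sum>s<n. qf ?Q (diagm C *v (transpose ?A *v X s)))"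
      using good C by (intro comp_bound[OF L W, where f = "F C"] Gb) auto
  qed
  also have "\<dots> = real CARD('n) * (2 ^ CARD('n) * G * (\<Sum>s<n. \<Sum>C\<in>?cs. qf ?Q (diagm C *v (transpose ?A *v X s))))"
    by (simp add: sum_distrib_left[symmetric] sum.swap[of _ ?cs])
  also have "\<dots> = real CARD('n) * (2 ^ CARD('n) * G * (\<Sum>s<n. X s \<bullet> (?K *v X s)))"
    by (simp only: qf_decomp[OF W, symmetric] qK)
  also have "\<dots> = (real CARD('n) * 2 ^ CARD('n) * G) * (real n * trace (?K ** sample_cov n X))"
    by (simp add: trace_sample)
  finally show ?thesis .
qed



declare transpose_matrix_vector[simp del]

lemma sigma_bound:
  fixes X :: "nat \<Rightarrow> real^'n::finite" and F :: "'n set \<Rightarrow> 'n \<Rightarrow> nat"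
  assumes good: "\<forall>C\<in>bidir_components B. inj_on (F C) (Pa D C) \<and> F C ` Pa D C \<subseteq> {..<n} \<and> det (Rm (Pa D C) (F C) X) \<noteq> 0"
  shows "\<exists>b. \<forall>Sig\<in>PD_G D B. loglik (sample_cov n X) Sig \<le> b"
proof -
  define G where "G = (\<Sum>C\<in>bidir_components B. \<Sum>k\<in>UNIV. \<Sum>j\<in>UNIV. ((matrix_inv (transpose (Rm (Pa D C) (F C) X)) *v axis k 1) $ j)^2)"
  define c where "c = real CARD('n) * 2 ^ CARD('n) * G * real n + 1"
  have G0: "G \<ge> 0" unfolding G_def by (intro sum_nonneg) auto
  have c0: "c > 0" unfolding c_def using G0 by (intro add_nonneg_pos mult_nonneg_nonneg) auto
  show ?thesis
  proof (intro exI ballI)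
    fix Sig assume "Sig \<in> PD_G D B"
    then obtain L W where L: "L \<in> Lambda_reg D" and W: "W \<in> PD_B B"
      and Sig: "Sig = transpose (matrix_inv (mat 1 - L)) ** W ** matrix_inv (mat 1 - L)"
      unfolding PD_G_def by blast
    let ?A = "mat 1 - L"
    let ?Ai = "matrix_inv ?A"
    let ?Q = "matrix_inv W"
    let ?K = "?A ** ?Q ** transpose ?A"
    let ?S = "sample_cov n X"
    have invA: "invertible ?A" using L by (simp add: Lambda_reg_def)
    have invW: "invertible W" using W pos_def_invertible by (auto simp: PD_B_def)
    note IA = inv_props[OF invA] and IW = inv_props[OF invW]
    have tA1: "transpose ?Ai ** transpose ?A = mat 1"
      using arg_cong[OF IA(1), of transpose] by (simp add: matrix_transpose_mul)
    have tA2: "transpose ?A ** transpose ?Ai = mat 1"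
      using arg_cong[OF IA(2), of transpose] by (simp add: matrix_transpose_mul)
    have inv1: "Sig ** ?K = mat 1"
    proof -
      have "Sig ** ?K = transpose ?Ai ** W ** (?Ai ** ?A) ** ?Q ** transpose ?A"
        unfolding Sig by (simp add: matrix_mul_assoc)
      also have "\<dots> = transpose ?Ai ** (W ** ?Q) ** transpose ?A"
        using IA by (simp add: matrix_mul_assoc)
      also have "\<dots> = mat 1" using IW tA1 by simp
      finally show ?thesis .
    qed
    have inv2: "?K ** Sig = mat 1"
    proof -
      have "?K ** Sig = ?A ** ?Q ** (transpose ?A ** transpose ?Ai) ** W ** ?Ai"
        unfolding Sig by (simp add: matrix_mul_assoc)
      also have "\<dots> = ?A ** (?Q ** W) ** ?Ai"
        using tA2 by (simp add: matrix_mul_assoc)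
      also have "\<dots> = mat 1" using IW IA by simp
      finally show ?thesis .
    qed
    have symW: "transpose W = W" using W by (simp add: PD_B_def pos_def_def)
    have sym: "transpose ?K = ?K"
      using transpose_inv_sym[OF invW symW] by (simp add: matrix_transpose_mul matrix_mul_assoc)
    have psdQ: "qf ?Q u \<ge> 0" for u using W inv_psd by (auto simp: PD_B_def qf_def)
    have psd: "qf ?K u \<ge> 0" for u using psdQ[of "transpose ?A *v u"] by (simp add: qf_def[of ?K] qK)
    have trS: "trace (?K ** ?S) \<ge> 0"
    proof (cases "n = 0")
      case True
      then show ?thesis by (simp add: sample_cov_def trace_def matrix_matrix_mult_def)
    next
      case False
      have "real n * trace (?K ** ?S) \<ge> 0"
        unfolding trace_sample using psd by (intro sum_nonneg) (simp add: qf_def)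
      then show ?thesis using False by (simp add: zero_le_mult_iff)
    qed
    have ti: "trace ?K \<le> (real CARD('n) * 2 ^ CARD('n) * G) * (real n * trace (?K ** ?S))"
      unfolding G_def by (rule trace_ineq[OF L W good])
    have tr: "trace ?K \<le> c * trace (?K ** ?S)"
      using ti trS unfolding c_def by (simp add: algebra_simps)
    show "loglik ?S Sig \<le> ln (real (card {p. p permutes (UNIV::'n set)})) + real CARD('n) * ln (real CARD('n) * c) - real CARD('n)"
      by (rule loglik_bound[OF inv1 inv2 sym psd c0 tr])
  qed
qed



theorem theorem4:
  fixes D :: "('n::finite \<times> 'n) set" and B :: "'n set set"
    and M :: "(real^'n) measure" and n :: nat
  assumes no_loops: "\<forall>i. (i, i) \<notin> D"
    and B_edges: "\<forall>e\<in>B. card e = 2"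
    and prob: "prob_space M"
    and borel: "sets M = sets borel"
    and abs_cont: "absolutely_continuous lborel M"
    and n_ge: "n \<ge> Max ((\<lambda>C. card (Pa D C)) ` bidir_components B)"
  shows "AE X in PiM {..<n} (\<lambda>_. M). max_loglik D B (sample_cov n X) < \<infinity>"
proof -
  let ?cs = "bidir_components B"
  have fin: "finite ?cs" unfolding bidir_components_def by (rule finite_quotient) (simp_all add: equiv_E)
  have "\<exists>f. inj_on f (Pa D C) \<and> f ` Pa D C \<subseteq> {..<n}" if C: "C \<in> ?cs" for C
  proof -
    have "card (Pa D C) \<le> Max ((\<lambda>C. card (Pa D C)) ` ?cs)"
      using fin C by (intro Max_ge) auto
    then have cn: "card (Pa D C) \<le> n" using n_ge by linarith
    obtain g where g: "bij_betw g (Pa D C) {0..<card (Pa D C)}"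
      using ex_bij_betw_finite_nat[of "Pa D C"] by auto
    then have "inj_on g (Pa D C)" "g ` Pa D C \<subseteq> {..<n}"
      using cn by (auto simp: bij_betw_def)
    then show ?thesis by blast
  qed
  then obtain F where F: "\<forall>C\<in>?cs. inj_on (F C) (Pa D C) \<and> F C ` Pa D C \<subseteq> {..<n}"
    by metis
  have "AE X in PiM {..<n} (\<lambda>_. M). \<forall>C\<in>?cs. det (Rm (Pa D C) (F C) X) \<noteq> 0"
  proof (rule AE_finite_allI[OF fin])
    fix C assume "C \<in> ?cs"
    then show "AE X in PiM {..<n} (\<lambda>_. M). det (Rm (Pa D C) (F C) X) \<noteq> 0"
      using F by (intro ae_Rm[OF prob borel abs_cont]) auto
  qed
  then show ?thesis
  proof (rule eventually_mono)
    fix X assume "\<forall>C\<in>?cs. det (Rm (Pa D C) (F C) X) \<noteq> 0"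
    then have good: "\<forall>C\<in>?cs. inj_on (F C) (Pa D C) \<and> F C ` Pa D C \<subseteq> {..<n} \<and> det (Rm (Pa D C) (F C) X) \<noteq> 0"
      using F by auto
    obtain b where b: "\<forall>Sig\<in>PD_G D B. loglik (sample_cov n X) Sig \<le> b"
      using sigma_bound[OF good] by blast
    have "max_loglik D B (sample_cov n X) \<le> ereal b"
      unfolding max_loglik_def using b by (intro SUP_least) auto
    then show "max_loglik D B (sample_cov n X) < \<infinity>"
      by (rule le_less_trans) simp
  qed
qed


end
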